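(* Let $f\colon X\to Y$ be a function of metric spaces and $A,B\subset X$. Suppose all $(r^A_X,r^A_Y)$-components of $A$ are $(R^A_X,R^A_Y)$-bounded and all $(r^B_X,r^B_Y)$-components of $B$ are $(R^B_X,R^B_Y)$-bounded. If $R^B_X+2r^B_X<r^A_X$ and $R^B_Y+2r^B_Y<r^A_Y$, then all $(r^B_X,r^B_Y)$-components of $A\cup B$ are $(R^A_X+2r^A_X,\,R^A_Y+2r^A_Y)$-bounded.
   Context: For $f\colon X\to Y$ and positive numbers $r_X,r_Y$: a set $C\subset X$ is $(r_X,r_Y)$-bounded if $d_X(x,x')\le r_X$ and $d_Y(f(x),f(x'))\le r_Y$ for all $x,x'\in C$. An $(r_X,r_Y)$-chain in $C$ is a sequence $x_1,\dots,x_j$ of points of $C$ such that each pair $\{x_i,x_{i+1}\}$ is $(r_X,r_Y)$-bounded. The $(r_X,r_Y)$-components of $C$ are the maximal subsets of $C$ any two points of which are joined by an $(r_X,r_Y)$-chain in $C$. *)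

theory Defs
  imports "HOL-Analysis.Analysis"
begin

definition rbounded :: "('a::metric_space \<Rightarrow> 'b::metric_space) \<Rightarrow> real \<Rightarrow> real \<Rightarrow> 'a set \<Rightarrow> bool" where
  "rbounded f rX rY C \<longleftrightarrow>
     (\<forall>x\<in>C. \<forall>x'\<in>C. dist x x' \<le> rX \<and> dist (f x) (f x') \<le> rY)"

definition rchain :: "('a::metric_space \<Rightarrow> 'b::metric_space) \<Rightarrow> real \<Rightarrow> real \<Rightarrow> 'a set \<Rightarrow> 'a list \<Rightarrow> bool" where
  "rchain f rX rY C xs \<longleftrightarrow> xs \<noteq> [] \<and> set xs \<subseteq> C \<and>
     (\<forall>i. Suc i < length xs \<longrightarrow> rbounded f rX rY {xs ! i, xs ! Suc i})"

definition rjoined :: "('a::metric_space \<Rightarrow> 'b::metric_space) \<Rightarrow> real \<Rightarrow> real \<Rightarrow> 'a set \<Rightarrow> 'a \<Rightarrow> 'a \<Rightarrow> bool" where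
  "rjoined f rX rY C x y \<longleftrightarrow>
     (\<exists>xs. rchain f rX rY C xs \<and> hd xs = x \<and> last xs = y)"

definition rcomponent :: "('a::metric_space \<Rightarrow> 'b::metric_space) \<Rightarrow> real \<Rightarrow> real \<Rightarrow> 'a set \<Rightarrow> 'a set \<Rightarrow> bool" where
  "rcomponent f rX rY C D \<longleftrightarrow>
     D \<subseteq> C \<and> (\<forall>x\<in>D. \<forall>y\<in>D. rjoined f rX rY C x y) \<and>
     (\<forall>E. D \<subseteq> E \<and> E \<subseteq> C \<and> (\<forall>x\<in>E. \<forall>y\<in>E. rjoined f rX rY C x y) \<longrightarrow> E = D)"

end

theory Submission
  imports Defs
begin

lemma rbounded_pair:
  "rbounded f r s {x,y} \<longleftrightarrow> 0 \<le> r \<and> 0 \<le> s \<and> dist x y \<le> r \<and> dist (f x) (f y) \<le> s"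
  unfolding rbounded_def by (auto simp: dist_commute)

lemma rchain_Cons:
  "rchain f r s C (a # xs) \<longleftrightarrow> a \<in> C \<and> (xs = [] \<or> (rchain f r s C xs \<and> rbounded f r s {a, hd xs}))"
proof
  assume h: "rchain f r s C (a # xs)"
  show "a \<in> C \<and> (xs = [] \<or> (rchain f r s C xs \<and> rbounded f r s {a, hd xs}))"
  proof (cases xs)
    case Nil then show ?thesis using h by (simp add: rchain_def)
  next
    case (Cons b ys)
    have 1: "rbounded f r s {a, hd xs}" using h Cons unfolding rchain_def
      by (metis Suc_less_eq hd_conv_nth length_Cons list.distinct(1) nth_Cons_0 nth_Cons_Suc zero_less_Suc)
    have 2: "rchain f r s C xs" using h Cons unfolding rchain_def
      by (metis Suc_less_eq length_Cons list.distinct(1) nth_Cons_Suc set_subset_Cons subset_trans)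
    show ?thesis using 1 2 h by (simp add: rchain_def)
  qed
next
  assume h: "a \<in> C \<and> (xs = [] \<or> (rchain f r s C xs \<and> rbounded f r s {a, hd xs}))"
  show "rchain f r s C (a # xs)"
  proof (cases "xs = []")
    case True then show ?thesis using h by (simp add: rchain_def)
  next
    case False
    then have c: "rchain f r s C xs" and b: "rbounded f r s {a, hd xs}" using h by auto
    show ?thesis unfolding rchain_def
    proof (intro conjI allI impI)
      show "a # xs \<noteq> []" by simp
      show "set (a # xs) \<subseteq> C" using h c by (auto simp: rchain_def)
      fix i assume i: "Suc i < length (a # xs)"
      show "rbounded f r s {(a # xs) ! i, (a # xs) ! Suc i}"
      proof (cases i)
        case 0 then show ?thesis using b False by (simp add: hd_conv_nth)
      next
        case (Suc j) then show ?thesis using c i by (simp add: rchain_def)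
      qed
    qed
  qed
qed

lemma rjoined_refl: "x \<in> C \<Longrightarrow> rjoined f r s C x x"
  unfolding rjoined_def by (rule exI[of _ "[x]"]) (simp add: rchain_def)

lemma rjoined_cons:
  assumes "x \<in> C" "rbounded f r s {x, x'}" "rjoined f r s C x' y"
  shows "rjoined f r s C x y"
proof -
  obtain xs where xs: "rchain f r s C xs" "hd xs = x'" "last xs = y"
    using assms(3) unfolding rjoined_def by blast
  have "xs \<noteq> []" using xs by (simp add: rchain_def)
  then have "rchain f r s C (x # xs)" using xs assms by (simp add: rchain_Cons)
  then show ?thesis unfolding rjoined_def using xs \<open>xs \<noteq> []\<close>
    by (intro exI[of _ "x # xs"]) auto
qed

lemma rjoined_mem: "rjoined f r s C x y \<Longrightarrow> x \<in> C \<and> y \<in> C"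
  unfolding rjoined_def rchain_def by (metis hd_in_set last_in_set subsetD)

lemma rchain_trans_aux:
  "rchain f r s C xs \<Longrightarrow> rjoined f r s C (last xs) z \<Longrightarrow> rjoined f r s C (hd xs) z"
proof (induction xs)
  case Nil then show ?case by (simp add: rchain_def)
next
  case (Cons a xs)
  show ?case
  proof (cases "xs = []")
    case True then show ?thesis using Cons by simp
  next
    case False
    then have "rchain f r s C xs" "rbounded f r s {a, hd xs}" "a \<in> C"
      using Cons.prems(1) by (auto simp: rchain_Cons)
    then show ?thesis using Cons False rjoined_cons by fastforce
  qed
qed

lemma rjoined_trans:
  "rjoined f r s C x y \<Longrightarrow> rjoined f r s C y z \<Longrightarrow> rjoined f r s C x z"
  unfolding rjoined_def[of f r s C x y] using rchain_trans_aux by blast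

lemma rchain_sym_aux:
  "rchain f r s C xs \<Longrightarrow> rjoined f r s C (last xs) (hd xs)"
proof (induction xs)
  case Nil then show ?case by (simp add: rchain_def)
next
  case (Cons a xs)
  show ?case
  proof (cases "xs = []")
    case True then show ?thesis using Cons by (simp add: rchain_Cons rjoined_refl)
  next
    case False
    then have h: "rchain f r s C xs" "rbounded f r s {a, hd xs}" "a \<in> C"
      using Cons.prems(1) by (auto simp: rchain_Cons)
    have hx: "hd xs \<in> C" using h(1) False unfolding rchain_def by auto
    have "rbounded f r s {hd xs, a}" using h(2) by (simp add: insert_commute)
    then have "rjoined f r s C (hd xs) a" using hx h(3) rjoined_cons rjoined_refl by metis
    then show ?thesis using Cons.IH[OF h(1)] False rjoined_trans by fastforce
  qed
qed

lemma rjoined_sym: "rjoined f r s C x y \<Longrightarrow> rjoined f r s C y x"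
  unfolding rjoined_def[of f r s C x y] using rchain_sym_aux by blast

lemma rcomponent_of:
  assumes "a \<in> C"
  shows "rcomponent f r s C {z \<in> C. rjoined f r s C a z}"
  unfolding rcomponent_def
proof (intro conjI allI impI ballI)
  show "{z \<in> C. rjoined f r s C a z} \<subseteq> C" by auto
next
  fix x y assume "x \<in> {z \<in> C. rjoined f r s C a z}" "y \<in> {z \<in> C. rjoined f r s C a z}"
  then show "rjoined f r s C x y" using rjoined_sym rjoined_trans by blast
next
  fix E assume E: "{z \<in> C. rjoined f r s C a z} \<subseteq> E \<and> E \<subseteq> C \<and> (\<forall>x\<in>E. \<forall>y\<in>E. rjoined f r s C x y)"
  have "a \<in> E" using E assms rjoined_refl by blast
  then show "E = {z \<in> C. rjoined f r s C a z}" using E by blast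
qed

lemma joined_bounded:
  assumes h: "\<And>D. rcomponent f r s C D \<Longrightarrow> rbounded f R S D"
    and j: "rjoined f r s C a z"
  shows "dist a z \<le> R \<and> dist (f a) (f z) \<le> S"
proof -
  have a: "a \<in> C" and z: "z \<in> C" using rjoined_mem[OF j] by auto
  have "rbounded f R S {w \<in> C. rjoined f r s C a w}" using h rcomponent_of[OF a] by blast
  then show ?thesis using a z j rjoined_refl[OF a] unfolding rbounded_def by blast
qed

theorem mainTheorem8:
  fixes f :: "'a::metric_space \<Rightarrow> 'b::metric_space"
    and A B :: "'a set"
    and rAX rAY RAX RAY rBX rBY RBX RBY :: real
  assumes pos: "rAX > 0" "rAY > 0" "RAX > 0" "RAY > 0"
               "rBX > 0" "rBY > 0" "RBX > 0" "RBY > 0"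
    and hA: "\<And>D. rcomponent f rAX rAY A D \<Longrightarrow> rbounded f RAX RAY D"
    and hB: "\<And>D. rcomponent f rBX rBY B D \<Longrightarrow> rbounded f RBX RBY D"
    and hX: "RBX + 2 * rBX < rAX"
    and hY: "RBY + 2 * rBY < rAY"
  shows "\<And>D. rcomponent f rBX rBY (A \<union> B) D \<Longrightarrow>
           rbounded f (RAX + 2 * rAX) (RAY + 2 * rAY) D"
proof -
  let ?JA = "rjoined f rAX rAY A"
  let ?JB = "rjoined f rBX rBY B"
  let ?bB = "rbounded f rBX rBY"
  define N where "N x a \<longleftrightarrow> x = a \<or> (\<exists>b. ?JB x b \<and> ?bB {b, a})" for x a
  have JBb: "dist u v \<le> RBX \<and> dist (f u) (f v) \<le> RBY" if "?JB u v" for u v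
    using joined_bounded[OF hB that] .
  have JAb: "dist u v \<le> RAX \<and> dist (f u) (f v) \<le> RAY" if "?JA u v" for u v
    using joined_bounded[OF hA that] .
  have Nb: "dist x a \<le> rAX \<and> dist (f x) (f a) \<le> rAY" if Nxa: "N x a" for x a
  proof (cases "x = a")
    case True
    then have "dist x a = 0" "dist (f x) (f a) = 0" by simp_all
    then show ?thesis using pos(1,2) by linarith
  next
    case False
    then obtain b where b: "?JB x b" "?bB {b, a}" using Nxa unfolding N_def by blast
    have "dist x a \<le> dist x b + dist b a" by (rule dist_triangle)
    moreover have "dist (f x) (f a) \<le> dist (f x) (f b) + dist (f b) (f a)" by (rule dist_triangle)
    ultimately show ?thesis using JBb[OF b(1)] b(2) hX hY pos unfolding rbounded_pair by linarith
  qed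
  have key: "\<And>xs. rchain f rBX rBY (A \<union> B) xs \<Longrightarrow>
      ?JB (hd xs) (last xs) \<or> (\<exists>a a'. a \<in> A \<and> a' \<in> A \<and> N (hd xs) a \<and> ?JA a a' \<and> N (last xs) a')"
  proof -
    fix xs show "rchain f rBX rBY (A \<union> B) xs \<Longrightarrow>
      ?JB (hd xs) (last xs) \<or> (\<exists>a a'. a \<in> A \<and> a' \<in> A \<and> N (hd xs) a \<and> ?JA a a' \<and> N (last xs) a')"
    proof (induction xs)
      case Nil then show ?case by (simp add: rchain_def)
    next
      case (Cons x xs)
      show ?case
      proof (cases "xs = []")
        case True
        then have "x \<in> A \<union> B" using Cons.prems by (simp add: rchain_Cons)
        show ?thesis
        proof (cases "x \<in> A")
          case True
          have "N x x" unfolding N_def by simp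
          then show ?thesis using True \<open>xs = []\<close> rjoined_refl[OF True, of f rAX rAY] by auto
        next
          case False
          then have "x \<in> B" using \<open>x \<in> A \<union> B\<close> by simp
          then show ?thesis using \<open>xs = []\<close> rjoined_refl[of x B f rBX rBY] by simp
        qed
      next
        case False
        then have c: "rchain f rBX rBY (A \<union> B) xs" and bx: "?bB {x, hd xs}" and x: "x \<in> A \<union> B"
          using Cons.prems by (auto simp: rchain_Cons)
        have last: "last (x # xs) = last xs" using False by simp
        have bxA: "rbounded f rAX rAY {x, hd xs}" using bx hX hY pos unfolding rbounded_pair by linarith
        show ?thesis
        proof (cases "x \<in> A")
          case xA: True
          from Cons.IH[OF c] show ?thesis
          proof
            assume j: "?JB (hd xs) (last xs)"
            have "hd xs \<in> B" using rjoined_mem[OF j] by blast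
            then have "N (last xs) x"
              unfolding N_def using rjoined_sym[OF j] bx by (auto simp: insert_commute)
            then show ?thesis using xA last rjoined_refl[OF xA, of f rAX rAY] unfolding N_def by auto
          next
            assume "\<exists>a a'. a \<in> A \<and> a' \<in> A \<and> N (hd xs) a \<and> ?JA a a' \<and> N (last xs) a'"
            then obtain a a' where aa: "a \<in> A" "a' \<in> A" "N (hd xs) a" "?JA a a'" "N (last xs) a'" by blast
            have "rbounded f rAX rAY {x, a}"
            proof (cases "hd xs = a")
              case True then show ?thesis using bxA by simp
            next
              case False
              then obtain b where b: "?JB (hd xs) b" "?bB {b, a}" using aa(3) N_def by blast
              have "dist x a \<le> dist x (hd xs) + dist (hd xs) b + dist b a"
                using dist_triangle[of x a "hd xs"] dist_triangle[of "hd xs" a b] by linarith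
              moreover have "dist (f x) (f a) \<le> dist (f x) (f (hd xs)) + dist (f (hd xs)) (f b) + dist (f b) (f a)"
                using dist_triangle[of "f x" "f a" "f (hd xs)"] dist_triangle[of "f (hd xs)" "f a" "f b"] by linarith
              ultimately show ?thesis using JBb[OF b(1)] b(2) bx hX hY pos unfolding rbounded_pair by linarith
            qed
            then have "?JA x a" using xA aa(1) rjoined_cons rjoined_refl by metis
            then have "?JA x a'" using aa(4) rjoined_trans by metis
            then show ?thesis using xA aa last unfolding N_def by auto
          qed
        next
          case xnA: False
          then have xB: "x \<in> B" using x by simp
          from Cons.IH[OF c] show ?thesis
          proof
            assume j: "?JB (hd xs) (last xs)"
            then show ?thesis using rjoined_cons[OF xB bx j] last by simp
          next
            assume "\<exists>a a'. a \<in> A \<and> a' \<in> A \<and> N (hd xs) a \<and> ?JA a a' \<and> N (last xs) a'"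
            then obtain a a' where aa: "a \<in> A" "a' \<in> A" "N (hd xs) a" "?JA a a'" "N (last xs) a'" by blast
            have "N x a"
            proof (cases "hd xs = a")
              case True then show ?thesis unfolding N_def using bx rjoined_refl[OF xB] by blast
            next
              case False
              then obtain b where b: "?JB (hd xs) b" "?bB {b, a}" using aa(3) N_def by blast
              show ?thesis unfolding N_def using rjoined_cons[OF xB bx b(1)] b(2) by blast
            qed
            then show ?thesis using aa last by auto
          qed
        qed
      qed
    qed
  qed
  fix D assume D: "rcomponent f rBX rBY (A \<union> B) D"
  show "rbounded f (RAX + 2 * rAX) (RAY + 2 * rAY) D"
    unfolding rbounded_def
  proof (intro ballI)
    fix x y assume "x \<in> D" "y \<in> D"
    then have "rjoined f rBX rBY (A \<union> B) x y" using D unfolding rcomponent_def by blast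
    then obtain xs where xs: "rchain f rBX rBY (A \<union> B) xs" "hd xs = x" "last xs = y"
      unfolding rjoined_def by blast
    from key[OF xs(1)] show "dist x y \<le> RAX + 2 * rAX \<and> dist (f x) (f y) \<le> RAY + 2 * rAY"
    proof
      assume "?JB (hd xs) (last xs)"
      then have "dist x y \<le> RBX \<and> dist (f x) (f y) \<le> RBY" using JBb xs(2,3) by blast
      then show ?thesis using hX hY pos by linarith
    next
      assume "\<exists>a a'. a \<in> A \<and> a' \<in> A \<and> N (hd xs) a \<and> ?JA a a' \<and> N (last xs) a'"
      then obtain a a' where aa: "N x a" "?JA a a'" "N y a'" using xs by blast
      have "dist x y \<le> dist x a + dist a a' + dist y a'"
        using dist_triangle[of x y a] dist_triangle[of a y a'] dist_commute[of y a'] by linarith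
      moreover have "dist (f x) (f y) \<le> dist (f x) (f a) + dist (f a) (f a') + dist (f y) (f a')"
        using dist_triangle[of "f x" "f y" "f a"] dist_triangle[of "f a" "f y" "f a'"] dist_commute[of "f y" "f a'"] by linarith
      ultimately show ?thesis using Nb[OF aa(1)] Nb[OF aa(3)] JAb[OF aa(2)] by linarith
    qed
  qed
qed

end
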